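(* Let $N,s$ be integers with $N>2$ and $1\le s<N$. For $\lambda\in\left[\frac{\pi}{2}-\frac{\pi}{2N}s,\frac{\pi}{2}\right)$ let $C^0(s,\lambda):=\arcsin\left(\tan\left(\frac{\pi}{2}-\frac{\pi}{2N}s\right)/\tan\lambda\right)$ and $t^0(s,\lambda):=-\frac{N}{\pi}\beta(\lambda,C^0(s,\lambda))$, where $\beta(\lambda,\varphi)=\varphi-2\arctan\left(\frac{\cos\frac{\lambda}{2}\sin\varphi}{\sin\frac{\lambda}{2}+\cos\frac{\lambda}{2}\cos\varphi}\right)$ (as a real number). Then $t^0(s,-)$ is strictly decreasing, hence injective, on $\left[\frac{\pi}{2}-\frac{\pi}{2N}s,\frac{\pi}{2}\right)$, and its image of this interval is $(0,\frac{s}{2}]$.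
   Context: Explicitly, $\beta(\lambda,C^0(s,\lambda))=\arcsin\left(\cot\left(\frac{\pi}{2N}s\right)\cot\lambda\right)-2\arctan\left(\frac{\cos\frac{\lambda}{2}\cot\left(\frac{\pi}{2N}s\right)\cot\lambda}{\sqrt{1-\cot^2\left(\frac{\pi}{2N}s\right)\cot^2\lambda}\,\cos\frac{\lambda}{2}+\sin\frac{\lambda}{2}}\right)$. *)

theory Defs
  imports Complex_Main
begin

definition beta :: "real \<Rightarrow> real \<Rightarrow> real" where
  "beta lam phi = phi - 2 * arctan (cos (lam/2) * sin phi / (sin (lam/2) + cos (lam/2) * cos phi))"

definition C0 :: "nat \<Rightarrow> nat \<Rightarrow> real \<Rightarrow> real" where
  "C0 N s lam = arcsin (tan (pi/2 - pi / (2 * real N) * real s) / tan lam)"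

definition t0 :: "nat \<Rightarrow> nat \<Rightarrow> real \<Rightarrow> real" where
  "t0 N s lam = - (real N / pi) * beta lam (C0 N s lam)"

end

theory Submission imports Defs begin
lemma gL: fixes dA dB t a b :: real assumes "dA \<noteq> 0" "dB \<noteq> 0"
  shows "t*(1 + (a/dA)*(t*(b/dB))) = t*(dA*dB + a*t*b)/(dA*dB)" using assms by (simp add: field_simps)
lemma gR: fixes dA dB t a b :: real assumes "dA \<noteq> 0" "dB \<noteq> 0"
  shows "a/dA - t*(b/dB) = (a*dB - t*b*dA)/(dA*dB)" using assms by (simp add: field_simps)
lemma alg:
  fixes c s w k t :: real
  assumes "k^2 = 1 - w^2" "t*(1+k) = w" "s+c*k > 0" "1+k > 0" "c+s > 0"
  shows "t * (1 + (c*w/(s+c*k)) * (t*((c-s)/(c+s)))) = c*w/(s+c*k) - t*((c-s)/(c+s))"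
proof -
  have t2: "t^2*(1+k) = 1-k"
  proof -
    have a: "(t*(1+k))^2 = 1-k^2" using assms(1,2) by simp
    have "t^2*(1+k)*(1+k) = (1-k)*(1+k)" using a by (simp add: power2_eq_square algebra_simps)
    thus ?thesis using assms(4) by simp
  qed
  have P: "t*((s+c*k)*(c+s) + c*w*t*(c-s)) = c*w*(c+s) - t*(c-s)*(s+c*k)"
  proof -
    have "t*((s+c*k)*(c+s) + c*w*t*(c-s)) - (c*w*(c+s) - t*(c-s)*(s+c*k)) = c*t*(c-s)*(t^2*(1+k) - (1-k))"
      unfolding assms(2)[symmetric] by (simp add: power2_eq_square algebra_simps)
    thus ?thesis using t2 by simp
  qed
  have L: "t * (1 + (c*w/(s+c*k)) * (t*((c-s)/(c+s)))) = t*((s+c*k)*(c+s) + c*w*t*(c-s)) / ((s+c*k)*(c+s))"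
    using gL[of "s+c*k" "c+s" t "c*w" "c-s"] assms(3,5) by (simp add: mult.assoc)
  have R: "c*w/(s+c*k) - t*((c-s)/(c+s)) = (c*w*(c+s) - t*(c-s)*(s+c*k)) / ((s+c*k)*(c+s))"
    using gR[where dA="s+c*k" and dB="c+s" and t=t and a="c*w" and b="c-s"] assms(3,5) by (simp add: mult.assoc)
  show ?thesis using L R P by simp
qed

lemma key:
  fixes w lam :: real
  assumes w0: "0<w" and w1: "w\<le>1" and l0: "0<lam" and l1: "lam<pi/2"
  shows "beta lam (arcsin w) = -2*arctan(w/(1+sqrt(1-w^2)) * ((cos(lam/2)-sin(lam/2))/(cos(lam/2)+sin(lam/2))))"
proof -
  define c where "c = cos(lam/2)"
  define s where "s = sin(lam/2)"
  define k where "k = sqrt(1-w^2)"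
  define t where "t = w/(1+k)"
  define phi where "phi = arcsin w"
  have c0: "c > 0" unfolding c_def by (rule cos_gt_zero_pi) (use l0 l1 in auto)
  have s0: "s > 0" unfolding s_def by (rule sin_gt_zero) (use l0 l1 in auto)
  have w2: "w^2 \<le> 1" using w0 w1 by (simp add: power_le_one)
  have k0: "k \<ge> 0" unfolding k_def using w2 by simp
  have kk: "k^2 = 1 - w^2" unfolding k_def using w2 by simp
  have sphi: "sin phi = w" unfolding phi_def using w0 w1 by simp
  have cphi: "cos phi = k" unfolding phi_def k_def using w0 w1 by (simp add: cos_arcsin)
  have pb: "-(pi/2) \<le> phi \<and> phi \<le> pi/2" unfolding phi_def using w0 w1 arcsin_bounded by auto
  have tphi: "tan (phi/2) = t"
    using tan_half[of "phi/2"] sphi cphi unfolding t_def by (simp add: add.commute)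
  have pb2: "-(pi/2) < phi/2" "phi/2 < pi/2" using pb pi_gt_zero by linarith+
  have at: "arctan t = phi/2" using tphi[symmetric] arctan_tan[OF pb2] by simp
  have cosl: "cos lam = c^2 - s^2" unfolding c_def s_def using cos_double[of "lam/2"] by simp
  have cl0: "cos lam > 0" using l0 l1 by (intro cos_gt_zero_pi) auto
  have cs: "c - s > 0"
  proof -
    have "(c-s)*(c+s) > 0" using cosl cl0 by (simp add: power2_eq_square algebra_simps)
    thus ?thesis using c0 s0 by (simp add: zero_less_mult_iff)
  qed
  define X where "X = c*w/(s+c*k)"
  define Y where "Y = t*((c-s)/(c+s))"
  have D1: "s + c*k > 0" using c0 s0 k0 by (simp add: add_pos_nonneg)
  have X0: "X > 0" unfolding X_def using c0 w0 D1 by (simp add: divide_pos_pos)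
  have Y0: "Y \<ge> 0" unfolding Y_def t_def using c0 s0 k0 w0 cs by (simp add: add_pos_nonneg)
  have aX: "0 < arctan X" "arctan X < pi/2" using X0 arctan_bounded[of X] by auto
  have aY: "0 \<le> arctan Y" "arctan Y < pi/2" using Y0 arctan_bounded[of Y] by auto
  have dd: "-(pi/2) < arctan X - arctan Y" "arctan X - arctan Y < pi/2" using aX aY by linarith+
  have cd: "cos (arctan X - arctan Y) > 0" using dd by (intro cos_gt_zero_pi) auto
  have td: "tan (arctan X - arctan Y) = (X - Y)/(1 + X*Y)"
    using tan_diff[of "arctan X" "arctan Y"] cd cos_arctan_not_zero by (auto simp: tan_arctan)
  have al: "t * (1 + X*Y) = X - Y"
    unfolding X_def Y_def
    using alg[of k w t s c] kk k0 c0 s0 w0 unfolding t_def by (simp add: add_pos_nonneg)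
  have XY: "1 + X*Y > 0" using X0 Y0 by (simp add: add_pos_nonneg)
  have "t = (X - Y)/(1+X*Y)" using al XY by (simp add: field_simps)
  hence "arctan t = arctan X - arctan Y"
    using td arctan_tan[OF dd] by simp
  hence ph: "phi = 2*arctan X - 2*arctan Y" using at by simp
  have "beta lam phi = phi - 2*arctan X" unfolding beta_def sphi cphi X_def c_def s_def by simp
  also have "... = -2*arctan Y" using ph by simp
  finally show ?thesis unfolding phi_def Y_def t_def k_def c_def s_def by simp
qed

lemma Qeq:
  fixes lam :: real
  assumes "cos(lam/2)+sin(lam/2) > 0"
  shows "(cos(lam/2)-sin(lam/2))/(cos(lam/2)+sin(lam/2)) = cos lam/(1+sin lam)"
proof -
  define c where "c = cos(lam/2)"
  define s where "s = sin(lam/2)"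
  have cl: "cos lam = c^2 - s^2" unfolding c_def s_def using cos_double[of "lam/2"] by simp
  have sl: "sin lam = 2*s*c" unfolding c_def s_def using sin_double[of "lam/2"] by simp
  have one: "c^2 + s^2 = 1" unfolding c_def s_def by simp
  have e: "1 + sin lam = (c+s)^2" using sl one by (simp add: power2_eq_square algebra_simps)
  have p: "c + s > 0" using assms unfolding c_def s_def .
  have "cos lam/(1+sin lam) = ((c-s)*(c+s))/((c+s)*(c+s))" unfolding cl e by (simp add: power2_eq_square algebra_simps)
  also have "... = (c-s)/(c+s)" using p by simp
  finally show ?thesis unfolding c_def s_def by simp
qed

lemma Gmono:
  fixes u v :: real
  assumes "0 < u" "u < v" "v \<le> 1"
  shows "u/(1+sqrt(1-u^2)) < v/(1+sqrt(1-v^2))"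
proof -
  have "u^2 < v^2" using assms by (intro power_strict_mono) auto
  hence k: "sqrt(1-v^2) \<le> sqrt(1-u^2)" by simp
  have v2: "v^2 \<le> 1" using assms by (simp add: power_le_one)
  have k0: "0 \<le> sqrt(1-v^2)" using v2 by simp
  have ku0: "0 < 1 + sqrt(1-u^2)" using k k0 by linarith
  have i1: "u*(1+sqrt(1-v^2)) \<le> u*(1+sqrt(1-u^2))" using k assms by (intro mult_left_mono) auto
  have i2: "u*(1+sqrt(1-u^2)) < v*(1+sqrt(1-u^2))" using assms(2) ku0 by (rule mult_strict_right_mono)
  have "u*(1+sqrt(1-v^2)) < v*(1+sqrt(1-u^2))" using i1 i2 by linarith
  moreover have "1+sqrt(1-v^2) > 0" "1+sqrt(1-u^2) > 0" using k0 k by linarith+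
  ultimately show ?thesis by (simp add: divide_simps)
qed

lemma Qmono:
  fixes x y :: real
  assumes "0 \<le> x" "x < y" "y \<le> pi/2"
  shows "cos y/(1+sin y) < cos x/(1+sin x)"
proof -
  have cy: "cos y < cos x" using assms by (intro cos_monotone_0_pi) auto
  have sy: "sin x < sin y" using assms by (intro sin_monotone_2pi) auto
  have sx0: "sin x \<ge> 0" using assms by (intro sin_ge_zero) auto
  have cy0: "cos y \<ge> 0" using assms by (intro cos_ge_zero) auto
  have "cos y*(1+sin x) \<le> cos y*(1+sin y)" using cy0 sy by (intro mult_left_mono) auto
  also have "... < cos x*(1+sin y)" using cy sy sx0 by (intro mult_strict_right_mono) auto
  finally show ?thesis using sx0 sy by (simp add: divide_simps)
qed

theorem lemma25:
  fixes N s :: nat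
  assumes "N > 2" and "1 \<le> s" and "s < N"
  shows "(\<forall>x\<in>{pi/2 - pi / (2 * real N) * real s ..< pi/2}.
            \<forall>y\<in>{pi/2 - pi / (2 * real N) * real s ..< pi/2}.
              x < y \<longrightarrow> t0 N s y < t0 N s x)
       \<and> inj_on (t0 N s) {pi/2 - pi / (2 * real N) * real s ..< pi/2}
       \<and> t0 N s ` {pi/2 - pi / (2 * real N) * real s ..< pi/2} = {0 <.. real s / 2}"
proof -
  define a where "a = pi/2 - pi / (2 * real N) * real s"
  have Np: "real N > 0" using assms by simp
  have sp: "real s > 0" using assms by simp
  have sN: "real s < real N" using assms by simp
  have b1: "pi / (2 * real N) * real s < pi/2"
  proof -
    have "pi / (2 * real N) * real s = (pi/2) * (real s / real N)" by (simp add: field_simps)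
    also have "... < (pi/2) * 1" using sN Np by (intro mult_strict_left_mono) (auto simp: pi_gt_zero)
    finally show ?thesis by simp
  qed
  have b0: "pi / (2 * real N) * real s > 0" using Np sp by (simp add: pi_gt_zero)
  have a0: "0 < a" and a1: "a < pi/2" using b0 b1 unfolding a_def by linarith+
  define T where "T = tan a"
  have sa: "sin a > 0" using a0 a1 by (intro sin_gt_zero) auto
  have ca: "cos a > 0" using a0 a1 by (intro cos_gt_zero_pi) auto
  have T0: "T > 0" unfolding T_def using sa ca by (simp add: tan_def)
  define W where "W = (\<lambda>lam::real. T*cos lam/sin lam)"
  define G where "G = (\<lambda>w::real. w/(1+sqrt(1-w^2)))"
  define Q where "Q = (\<lambda>lam::real. cos lam/(1+sin lam))"
  define F where "F = (\<lambda>lam. 2*real N/pi * arctan (G (W lam) * Q lam))"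
  have sinp: "sin lam > 0" if "a \<le> lam" "lam \<le> pi/2" for lam using that a0 by (intro sin_gt_zero) auto
  have cosp: "cos lam > 0" if "a \<le> lam" "lam < pi/2" for lam using that a0 by (intro cos_gt_zero_pi) auto
  have Wt: "W lam = T / tan lam" if "a \<le> lam" "lam < pi/2" for lam
    unfolding W_def tan_def using sinp[of lam] cosp[of lam] that by simp
  have Wb: "0 < W lam \<and> W lam \<le> 1" if "a \<le> lam" "lam < pi/2" for lam
  proof -
    have "T \<le> tan lam" unfolding T_def using that a0 by (intro tan_mono_le) auto
    moreover have "tan lam > 0" using sinp[of lam] cosp[of lam] that by (simp add: tan_def)
    ultimately show ?thesis using Wt[OF that] T0 by simp
  qed
  have Wb2: "0 \<le> W lam \<and> W lam \<le> 1" if "a \<le> lam" "lam \<le> pi/2" for lam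
  proof (cases "lam = pi/2")
    case True
    have "W (pi/2) = 0" by (simp add: W_def)
    thus ?thesis using True by (simp del: eq_divide_eq_numeral1 add: True)
  next
    case False thus ?thesis using Wb[of lam] that by simp
  qed
  have eq: "t0 N s lam = F lam" if "a \<le> lam" "lam < pi/2" for lam
  proof -
    have C: "C0 N s lam = arcsin (W lam)" unfolding C0_def Wt[OF that] a_def[symmetric] T_def ..
    have cs: "cos(lam/2) + sin(lam/2) > 0"
    proof -
      have "cos(lam/2) > 0" using that a0 by (intro cos_gt_zero_pi) auto
      moreover have "sin(lam/2) > 0" using that a0 by (intro sin_gt_zero) auto
      ultimately show ?thesis by simp
    qed
    have "beta lam (arcsin (W lam)) = -2 * arctan (G (W lam) * Q lam)"
      using key[of "W lam" lam] Wb[OF that] that a0 Qeq[OF cs] unfolding G_def Q_def by simp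
    thus ?thesis unfolding t0_def C F_def by simp
  qed
  have Gp: "G w > 0" if "0 < w" "w \<le> 1" for w
  proof -
    have "w^2 \<le> 1" using that by (simp add: power_le_one)
    hence "sqrt(1-w^2) \<ge> 0" by simp
    thus ?thesis unfolding G_def using that by (simp add: add_pos_nonneg)
  qed
  have Qp: "Q lam > 0" if "a \<le> lam" "lam < pi/2" for lam
    unfolding Q_def using sinp[of lam] cosp[of lam] that by (simp add: add_pos_pos)
  have mono: "F y < F x" if "a \<le> x" "x < y" "y < pi/2" for x y
  proof -
    have hx: "a \<le> x" "x < pi/2" and hy: "a \<le> y" "y < pi/2" using that by auto
    have tx: "tan x > 0" using sinp[of x] cosp[of x] hx by (simp add: tan_def)
    have "tan x < tan y" using that a0 by (intro tan_monotone) auto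
    hence "T / tan y < T / tan x" using tx T0 by (intro divide_strict_left_mono) auto
    hence wl: "W y < W x" using Wt[OF hx] Wt[OF hy] by simp
    have g: "G (W y) < G (W x)" unfolding G_def using Wb[OF hx] Wb[OF hy] wl by (intro Gmono) auto
    have q: "Q y < Q x" unfolding Q_def using that a0 by (intro Qmono) auto
    have "G (W y) * Q y < G (W x) * Q x"
      using g q Gp[of "W x"] Wb[OF hx] Qp[OF hy] by (intro mult_strict_mono) auto
    hence "arctan (G (W y) * Q y) < arctan (G (W x) * Q x)" by (simp add: arctan_less_iff)
    moreover have "2*real N/pi > 0" using Np by (simp add: pi_gt_zero)
    ultimately show ?thesis unfolding F_def by (intro mult_strict_left_mono) auto
  qed
  have Fp: "F lam > 0" if "a \<le> lam" "lam < pi/2" for lam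
  proof -
    have "G (W lam) * Q lam > 0" using Gp[of "W lam"] Wb[OF that] Qp[OF that] by simp
    hence A: "arctan (G (W lam) * Q lam) > 0" by simp
    have B: "2*real N/pi > 0" using Np by (simp add: pi_gt_zero)
    show ?thesis unfolding F_def by (rule mult_pos_pos[OF B A])
  qed
  have Fend: "F (pi/2) = 0" unfolding F_def Q_def by simp
  have Fa: "F a = real s / 2"
  proof -
    have w1: "W a = 1" unfolding W_def T_def tan_def using sa ca by simp
    have g1: "G 1 = 1" unfolding G_def by simp
    have th: "tan (pi/4 - a/2) = Q a"
    proof -
      have e: "2*(pi/4 - a/2) = pi/2 - a" by simp
      have "tan (pi/4 - a/2) = sin (pi/2 - a) / (cos (pi/2 - a) + 1)" using tan_half[of "pi/4 - a/2"] unfolding e .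
      moreover have "sin (pi/2 - a) = cos a" by (simp add: sin_diff)
      moreover have "cos (pi/2 - a) = sin a" by (simp add: cos_diff)
      ultimately show ?thesis unfolding Q_def by (simp add: add.commute)
    qed
    have "arctan (Q a) = pi/4 - a/2" using th[symmetric] arctan_tan[of "pi/4 - a/2"] a0 a1 by simp
    hence "F a = 2*real N/pi * (pi/4 - a/2)" unfolding F_def w1 g1 by simp
    also have "... = real s / 2" unfolding a_def using Np by (simp add: field_simps)
    finally show ?thesis .
  qed
  have cont: "continuous_on {a..pi/2} F"
  proof -
    have s0: "\<forall>x\<in>{a..pi/2}. sin x \<noteq> 0" using sinp by force
    have s1: "\<forall>x\<in>{a..pi/2}. 1 + sin x \<noteq> 0" using sinp by force
    have s2: "\<forall>x\<in>{a..pi/2}. 1 + sqrt(1 - (W x)^2) \<noteq> 0"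
    proof
      fix x assume "x \<in> {a..pi/2}"
      hence "0 \<le> W x \<and> W x \<le> 1" using Wb2 by auto
      hence "(W x)^2 \<le> 1" by (simp add: power_le_one)
      hence "sqrt(1 - (W x)^2) \<ge> 0" by simp
      thus "1 + sqrt(1 - (W x)^2) \<noteq> 0" by linarith
    qed
    have cW: "continuous_on {a..pi/2} W" unfolding W_def using s0 by (intro continuous_intros) auto
    have cG: "continuous_on {a..pi/2} (\<lambda>x. G (W x))" unfolding G_def using s2 cW
      by (intro continuous_intros) auto
    have cQ: "continuous_on {a..pi/2} Q" unfolding Q_def using s1 by (intro continuous_intros) auto
    show ?thesis unfolding F_def using cG cQ by (intro continuous_intros) auto
  qed
  define I where "I = {pi/2 - pi / (2 * real N) * real s ..< pi/2}"
  have I: "I = {a..<pi/2}" unfolding I_def a_def ..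
  have P1: "\<forall>x\<in>I. \<forall>y\<in>I. x < y \<longrightarrow> t0 N s y < t0 N s x"
    unfolding I using eq mono by auto
  have P2: "inj_on (t0 N s) I"
  proof (rule inj_onI)
    fix x y assume xy: "x \<in> I" "y \<in> I" "t0 N s x = t0 N s y"
    show "x = y"
    proof (rule ccontr)
      assume "x \<noteq> y"
      hence "x < y \<or> y < x" by linarith
      thus False using P1 xy by force
    qed
  qed
  have P3: "t0 N s ` I = {0<..real s / 2}"
  proof
    show "t0 N s ` I \<subseteq> {0<..real s / 2}"
    proof
      fix z assume "z \<in> t0 N s ` I"
      then obtain x where x: "x \<in> I" "z = t0 N s x" by auto
      have xx: "a \<le> x" "x < pi/2" using x I by auto
      have "F x \<le> F a"
      proof (cases "x = a")
        case False
        hence "a < x" using xx by simp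
        thus ?thesis using mono[of a x] xx by simp
      qed simp
      thus "z \<in> {0<..real s / 2}" using eq[OF xx] Fp[OF xx] x Fa by simp
    qed
  next
    show "{0<..real s / 2} \<subseteq> t0 N s ` I"
    proof
      fix z assume z: "z \<in> {0<..real s / 2}"
      have "\<exists>x\<ge>a. x \<le> pi/2 \<and> F x = z"
        using z Fend Fa a1 cont by (intro IVT2') auto
      then obtain x where x: "a \<le> x" "x \<le> pi/2" "F x = z" by auto
      have "x \<noteq> pi/2"
      proof
        assume "x = pi/2"
        hence "F x = 0" using Fend by (simp only:)
        thus False using x z by simp
      qed
      hence xx: "a \<le> x" "x < pi/2" using x by auto
      hence "x \<in> I" using I by auto
      thus "z \<in> t0 N s ` I" using eq[OF xx] x by (metis image_eqI)
    qed
  qed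
  show ?thesis using P1 P2 P3 unfolding I_def by blast
qed
end
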